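(* There is a constant $c>0$ such that for all $n$: if $R_1,\dots,R_\ell$ are ordered balanced set rectangles (each with respect to its own ordered balanced partition of $Z$), pairwise disjoint, with $\bigcup_{i\in[\ell]}R_i=\mathcal{L}_n$, then $\ell\ge 2^{cn}$.
   Context: $X=\{x_1,\dots,x_n\}$, $Y=\{y_1,\dots,y_n\}$, $Z=X\cup Y$, $z_i=x_i$ for $i\in[n]$, $z_i=y_{i-n}$ for $i\in[n+1,2n]$, $Z[i,j]=\{z_\ell: i\le\ell\le j\}$. $\mathcal{L}_n=\{U\subseteq Z : \exists i\in[n],\ x_i\in U \text{ and } y_i\in U\}$ (the set version of the language of words of length $2n$ over $\{a,b\}$ with two $a$'s at distance $n$). A partition $(\Pi_0,\Pi_1)$ of $Z$ is ordered (induced by $[i,j]$) if $\Pi_\ell=Z[i,j]$ for some $\ell\in\{0,1\}$; it is balanced if $2n/3\le|\Pi_0|,|\Pi_1|\le 4n/3$. A $(\Pi_0,\Pi_1)$-rectangle is a family $S\times T=\{U\cup V: U\in S,V\in T\}$ with $S\subseteq\mathcal{P}(\Pi_0)$, $T\subseteq\mathcal{P}(\Pi_1)$; it is ordered balanced if $(\Pi_0,\Pi_1)$ is ordered and balanced. *)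

theory Defs
  imports Complex_Main
begin

text \<open>Encoding: z_k is represented by the natural number k, for 1 <= k <= 2n.
  Thus x_i = i and y_i = n + i for i in [n].\<close>

definition Zset :: "nat \<Rightarrow> nat set" where
  "Zset n = {1..2*n}"

definition xe :: "nat \<Rightarrow> nat \<Rightarrow> nat" where
  "xe n i = i"

definition ye :: "nat \<Rightarrow> nat \<Rightarrow> nat" where
  "ye n i = n + i"

definition Zint :: "nat \<Rightarrow> nat \<Rightarrow> nat \<Rightarrow> nat set" where
  "Zint n i j = {l \<in> Zset n. i \<le> l \<and> l \<le> j}"

definition Lang :: "nat \<Rightarrow> nat set set" where
  "Lang n = {U. U \<subseteq> Zset n \<and> (\<exists>i\<in>{1..n}. xe n i \<in> U \<and> ye n i \<in> U)}"

definition is_partition :: "nat \<Rightarrow> nat set \<Rightarrow> nat set \<Rightarrow> bool" where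
  "is_partition n P0 P1 \<longleftrightarrow> P0 \<union> P1 = Zset n \<and> P0 \<inter> P1 = {}"

definition ordered_partition :: "nat \<Rightarrow> nat set \<Rightarrow> nat set \<Rightarrow> bool" where
  "ordered_partition n P0 P1 \<longleftrightarrow> is_partition n P0 P1 \<and>
     (\<exists>i j. P0 = Zint n i j \<or> P1 = Zint n i j)"

definition balanced_partition :: "nat \<Rightarrow> nat set \<Rightarrow> nat set \<Rightarrow> bool" where
  "balanced_partition n P0 P1 \<longleftrightarrow> is_partition n P0 P1 \<and>
     2 * real n / 3 \<le> real (card P0) \<and> real (card P0) \<le> 4 * real n / 3 \<and>
     2 * real n / 3 \<le> real (card P1) \<and> real (card P1) \<le> 4 * real n / 3"

definition rect :: "nat set set \<Rightarrow> nat set set \<Rightarrow> nat set set" where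
  "rect S T = {U \<union> V | U V. U \<in> S \<and> V \<in> T}"

definition is_rectangle :: "nat set \<Rightarrow> nat set \<Rightarrow> nat set set \<Rightarrow> bool" where
  "is_rectangle P0 P1 R \<longleftrightarrow> (\<exists>S T. S \<subseteq> Pow P0 \<and> T \<subseteq> Pow P1 \<and> R = rect S T)"

definition ordered_balanced_rectangle :: "nat \<Rightarrow> nat set set \<Rightarrow> bool" where
  "ordered_balanced_rectangle n R \<longleftrightarrow> (\<exists>P0 P1. ordered_partition n P0 P1 \<and>
     balanced_partition n P0 P1 \<and> is_rectangle P0 P1 R)"

end

theory Submission
  imports Defs
begin

lemma sum_Pow_Un:
  assumes "A \<inter> B = {}" "finite A" "finite B"
  shows "(\<Sum>X\<in>Pow (A \<union> B). f X) = (\<Sum>X1\<in>Pow A. \<Sum>X2\<in>Pow B. f (X1 \<union> X2))"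
proof -
  have bij: "bij_betw (\<lambda>(X1,X2). X1 \<union> X2) (Pow A \<times> Pow B) (Pow (A \<union> B))"
  proof (rule bij_betw_imageI)
    show "inj_on (\<lambda>(X1,X2). X1 \<union> X2) (Pow A \<times> Pow B)"
      using assms(1) unfolding inj_on_def by auto blast+
    show "(\<lambda>(X1,X2). X1 \<union> X2) ` (Pow A \<times> Pow B) = Pow (A \<union> B)"
    proof
      show "(\<lambda>(X1,X2). X1 \<union> X2) ` (Pow A \<times> Pow B) \<subseteq> Pow (A \<union> B)" by auto
      show "Pow (A \<union> B) \<subseteq> (\<lambda>(X1,X2). X1 \<union> X2) ` (Pow A \<times> Pow B)"
      proof
        fix X assume "X \<in> Pow (A \<union> B)"
        then have "X = (X \<inter> A) \<union> (X \<inter> B)" "(X \<inter> A, X \<inter> B) \<in> Pow A \<times> Pow B" by auto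
        then show "X \<in> (\<lambda>(X1,X2). X1 \<union> X2) ` (Pow A \<times> Pow B)" by (metis (no_types, lifting) case_prod_conv image_eqI)
      qed
    qed
  qed
  have "(\<Sum>X\<in>Pow (A \<union> B). f X) = (\<Sum>p\<in>Pow A \<times> Pow B. f (case p of (X1,X2) \<Rightarrow> X1 \<union> X2))"
    using sum.reindex_bij_betw[OF bij, of f] by (simp add: case_prod_beta)
  also have "\<dots> = (\<Sum>X1\<in>Pow A. \<Sum>X2\<in>Pow B. f (X1 \<union> X2))"
    by (simp add: sum.cartesian_product case_prod_beta)
  finally show ?thesis .
qed

lemma sum_Pow_prod:
  fixes g :: "'a \<Rightarrow> 'b set \<Rightarrow> real"
  assumes "finite K" "finite D" "D \<subseteq> (\<Union>k\<in>K. B k)"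
    "\<forall>i\<in>K. \<forall>j\<in>K. i \<noteq> j \<longrightarrow> B i \<inter> B j = {}"
  shows "(\<Sum>X\<in>Pow D. \<Prod>k\<in>K. g k (X \<inter> B k)) = (\<Prod>k\<in>K. \<Sum>Z\<in>Pow (D \<inter> B k). g k Z)"
  using assms
proof (induction K arbitrary: D rule: finite_induct)
  case empty
  then show ?case by simp
next
  case (insert k K)
  define D1 where "D1 = D - B k"
  define D2 where "D2 = D \<inter> B k"
  have D: "D = D1 \<union> D2" "D1 \<inter> D2 = {}" "finite D1" "finite D2"
    using insert.prems by (auto simp: D1_def D2_def)
  have D1sub: "D1 \<subseteq> (\<Union>j\<in>K. B j)" using insert.prems by (auto simp: D1_def)
  have disjK: "\<forall>i\<in>K. \<forall>j\<in>K. i \<noteq> j \<longrightarrow> B i \<inter> B j = {}" using insert.prems by auto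
  have disjk: "B j \<inter> B k = {}" if "j \<in> K" for j
  proof -
    have "j \<noteq> k" using that insert.hyps by auto
    then show ?thesis using insert.prems(3) that by auto
  qed
  have IH: "(\<Sum>X\<in>Pow D1. \<Prod>j\<in>K. g j (X \<inter> B j)) = (\<Prod>j\<in>K. \<Sum>Z\<in>Pow (D1 \<inter> B j). g j Z)"
    using insert.IH[OF D(3) D1sub disjK] .
  have e1: "D1 \<inter> B j = D \<inter> B j" if "j \<in> K" for j using disjk[OF that] by (auto simp: D1_def)
  have "(\<Sum>X\<in>Pow D. \<Prod>j\<in>insert k K. g j (X \<inter> B j))
      = (\<Sum>X1\<in>Pow D1. \<Sum>X2\<in>Pow D2. \<Prod>j\<in>insert k K. g j ((X1 \<union> X2) \<inter> B j))"
    using sum_Pow_Un[OF D(2) D(3) D(4)] D(1) by simp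
  also have "\<dots> = (\<Sum>X1\<in>Pow D1. \<Sum>X2\<in>Pow D2. g k X2 * (\<Prod>j\<in>K. g j (X1 \<inter> B j)))"
  proof (intro sum.cong refl)
    fix X1 X2 assume X: "X1 \<in> Pow D1" "X2 \<in> Pow D2"
    have a: "(X1 \<union> X2) \<inter> B k = X2" using X by (auto simp: D1_def D2_def)
    have b: "(X1 \<union> X2) \<inter> B j = X1 \<inter> B j" if "j \<in> K" for j
      using X disjk[OF that] by (auto simp: D2_def)
    show "(\<Prod>j\<in>insert k K. g j ((X1 \<union> X2) \<inter> B j)) = g k X2 * (\<Prod>j\<in>K. g j (X1 \<inter> B j))"
      using insert.hyps a b by (simp add: prod.insert)
  qed
  also have "\<dots> = (\<Sum>X2\<in>Pow D2. g k X2) * (\<Sum>X1\<in>Pow D1. \<Prod>j\<in>K. g j (X1 \<inter> B j))"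
    by (simp add: sum_distrib_left sum_distrib_right)
  also have "\<dots> = (\<Prod>j\<in>insert k K. \<Sum>Z\<in>Pow (D \<inter> B j). g j Z)"
    using insert.hyps IH e1 by (simp add: D2_def)
  finally show ?case .
qed

lemma Pow_two: "Pow {a, b} = {{}, {a}, {b}, {a, b}}"
  by (auto simp: subset_insert_iff)

lemma sum_Pow_two:
  fixes f :: "'a set \<Rightarrow> real"
  assumes "a \<noteq> b"
  shows "(\<Sum>Z\<in>Pow {a,b}. f Z) = f {} + f {a} + f {b} + f {a,b}"
  using assms unfolding Pow_two by (simp add: insert_commute)

lemma sum_Pow_one:
  fixes f :: "'a set \<Rightarrow> real"
  shows "(\<Sum>Z\<in>Pow {a}. f Z) = f {} + f {a}"
proof -
  have "Pow {a} = {{}, {a}}" by blast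
  then show ?thesis by simp
qed

definition blk :: "nat \<Rightarrow> nat \<Rightarrow> nat set" where "blk n k = {k, n+k}"
definition w4 :: "bool \<Rightarrow> bool \<Rightarrow> real" where
  "w4 a b = (if a then (if b then -1 else 3) else (if b then 3 else 1))"
definition wt :: "nat \<Rightarrow> nat \<Rightarrow> nat set \<Rightarrow> real" where "wt n k V = w4 (k \<in> V) (n+k \<in> V)"
definition mu :: "nat \<Rightarrow> nat set \<Rightarrow> real" where
  "mu n U = (\<Prod>k\<in>{1..n}. wt n k (U \<inter> blk n k))"

lemma blk_disj: "\<forall>i\<in>{1..n}. \<forall>j\<in>{1..n}. i \<noteq> j \<longrightarrow> blk n i \<inter> blk n j = {}"
  by (auto simp: blk_def)

lemma Zset_blk: "Zset n = (\<Union>k\<in>{1..n}. blk n k)"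
proof
  show "Zset n \<subseteq> (\<Union>k\<in>{1..n}. blk n k)"
  proof
    fix x assume "x \<in> Zset n"
    then have "1 \<le> x" "x \<le> 2*n" by (auto simp: Zset_def)
    show "x \<in> (\<Union>k\<in>{1..n}. blk n k)"
    proof (cases "x \<le> n")
      case True then show ?thesis using \<open>1 \<le> x\<close> by (auto simp: blk_def)
    next
      case False
      then have "x - n \<in> {1..n}" "x = n + (x - n)" using \<open>x \<le> 2*n\<close> by auto
      then show ?thesis by (auto simp: blk_def intro!: bexI[of _ "x-n"])
    qed
  qed
  show "(\<Union>k\<in>{1..n}. blk n k) \<subseteq> Zset n" by (auto simp: blk_def Zset_def)
qed

lemma Zset_blk_int: "k \<in> {1..n} \<Longrightarrow> Zset n \<inter> blk n k = blk n k"
  using Zset_blk by blast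

lemma sum_mu_all: "(\<Sum>U\<in>Pow (Zset n). mu n U) = 6 ^ n"
proof -
  have "(\<Sum>U\<in>Pow (Zset n). mu n U) = (\<Prod>k\<in>{1..n}. \<Sum>Z\<in>Pow (Zset n \<inter> blk n k). wt n k Z)"
    unfolding mu_def
    apply (rule sum_Pow_prod)
       apply simp
      apply (simp add: Zset_def)
     apply (rule equalityD1[OF Zset_blk])
    apply (rule blk_disj)
    done
  also have "\<dots> = (\<Prod>k\<in>{1..n}. 6)"
  proof (rule prod.cong[OF refl])
    fix k assume k: "k \<in> {1..n}"
    then have "k \<noteq> n + k" by auto
    then show "(\<Sum>Z\<in>Pow (Zset n \<inter> blk n k). wt n k Z) = 6"
      using Zset_blk_int[OF k] by (simp add: blk_def sum_Pow_two wt_def w4_def)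
  qed
  finally show ?thesis by simp
qed

definition ind :: "nat \<Rightarrow> nat \<Rightarrow> nat set \<Rightarrow> real" where
  "ind n k Z = (if k \<in> Z \<and> n + k \<in> Z then 0 else 1)"

lemma sum_mu_Lang: "(\<Sum>U\<in>Lang n. mu n U) = 6 ^ n - 7 ^ n"
proof -
  define NoP where "NoP = {U \<in> Pow (Zset n). \<forall>k\<in>{1..n}. \<not> (k \<in> U \<and> n + k \<in> U)}"
  have L: "Lang n = Pow (Zset n) - NoP"
    by (auto simp: Lang_def NoP_def xe_def ye_def)
  have fin: "finite (Pow (Zset n))" by (simp add: Zset_def)
  have sub: "NoP \<subseteq> Pow (Zset n)" by (auto simp: NoP_def)
  have "(\<Sum>U\<in>NoP. mu n U) = (\<Sum>U\<in>Pow (Zset n). if \<forall>k\<in>{1..n}. \<not> (k \<in> U \<and> n + k \<in> U) then mu n U else 0)"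
    unfolding NoP_def by (rule sum.inter_filter[OF fin])
  also have "\<dots> = (\<Sum>U\<in>Pow (Zset n). \<Prod>k\<in>{1..n}. wt n k (U \<inter> blk n k) * ind n k (U \<inter> blk n k))"
  proof (rule sum.cong[OF refl])
    fix U
    have "(\<Prod>k\<in>{1..n}. wt n k (U \<inter> blk n k) * ind n k (U \<inter> blk n k))
        = mu n U * (\<Prod>k\<in>{1..n}. ind n k (U \<inter> blk n k))"
      by (simp add: mu_def prod.distrib)
    also have "(\<Prod>k\<in>{1..n}. ind n k (U \<inter> blk n k)) = (if \<forall>k\<in>{1..n}. \<not> (k \<in> U \<and> n + k \<in> U) then 1 else 0)"
    proof (cases "\<forall>k\<in>{1..n}. \<not> (k \<in> U \<and> n + k \<in> U)")
      case True
      then have "\<forall>k\<in>{1..n}. ind n k (U \<inter> blk n k) = 1" by (auto simp: ind_def)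
      then show ?thesis using True by simp
    next
      case False
      then obtain k where "k \<in> {1..n}" "k \<in> U" "n + k \<in> U" by auto
      then have "ind n k (U \<inter> blk n k) = 0" by (auto simp: ind_def blk_def)
      then have "(\<Prod>k\<in>{1..n}. ind n k (U \<inter> blk n k)) = 0"
        using \<open>k \<in> {1..n}\<close> prod_zero[of "{1..n}" "\<lambda>k. ind n k (U \<inter> blk n k)"] by auto
      then show ?thesis using False by (simp only: if_not_P[OF False] if_False)
    qed
    finally show "(if \<forall>k\<in>{1..n}. \<not> (k \<in> U \<and> n + k \<in> U) then mu n U else 0) =
        (\<Prod>k\<in>{1..n}. wt n k (U \<inter> blk n k) * ind n k (U \<inter> blk n k))" by (cases "\<forall>k\<in>{1..n}. \<not> (k \<in> U \<and> n + k \<in> U)") auto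
  qed
  also have "\<dots> = (\<Prod>k\<in>{1..n}. \<Sum>Z\<in>Pow (Zset n \<inter> blk n k). wt n k Z * ind n k Z)"
    apply (rule sum_Pow_prod[where g = "\<lambda>k Z. wt n k Z * ind n k Z"])
       apply simp
      apply (simp add: Zset_def)
     apply (rule equalityD1[OF Zset_blk])
    apply (rule blk_disj)
    done
  also have "\<dots> = (\<Prod>k\<in>{1..n}. 7)"
  proof (rule prod.cong[OF refl])
    fix k assume k: "k \<in> {1..n}"
    then have "k \<noteq> n + k" by auto
    then show "(\<Sum>Z\<in>Pow (Zset n \<inter> blk n k). wt n k Z * ind n k Z) = 7"
      using Zset_blk_int[OF k] by (simp add: blk_def sum_Pow_two wt_def w4_def ind_def)
  qed
  finally have NoPs: "(\<Sum>U\<in>NoP. mu n U) = 7 ^ n" by simp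
  show ?thesis
    unfolding L using sum_diff[OF fin sub, of "mu n"] NoPs sum_mu_all by simp
qed

definition FF :: "nat \<Rightarrow> nat set \<Rightarrow> nat \<Rightarrow> nat set \<Rightarrow> nat set \<Rightarrow> real" where
  "FF n PA k Z Z' = (\<Sum>V\<in>Pow (PA \<inter> blk n k). wt n k (V \<union> Z) * wt n k (V \<union> Z'))"

lemma block_val:
  assumes "PA \<union> PB = Zset n" "PA \<inter> PB = {}" "\<forall>k\<in>{1..n}. \<not> (k \<in> PA \<and> n + k \<in> PA)"
    and k: "k \<in> {1..n}"
  shows "(\<Sum>Z\<in>Pow (PB \<inter> blk n k). \<Sum>Z'\<in>Pow (PB \<inter> blk n k). \<bar>FF n PA k Z Z'\<bar>)
       = (if k \<in> PA \<or> n + k \<in> PA then 20 else 64)"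
proof -
  have kk: "k \<noteq> n + k" using k by auto
  have inZ: "k \<in> Zset n" "n + k \<in> Zset n" using k by (auto simp: Zset_def)
  consider (a) "k \<in> PA" | (b) "n + k \<in> PA" | (c) "k \<notin> PA" "n + k \<notin> PA" by blast
  then show ?thesis
  proof cases
    case a
    then have "n + k \<notin> PA" using assms(3) k by auto
    then have "n + k \<in> PB" "k \<notin> PB" using a inZ assms(1,2) by auto
    then have e: "PA \<inter> blk n k = {k}" "PB \<inter> blk n k = {n+k}"
      using a \<open>n + k \<notin> PA\<close> by (auto simp: blk_def)
    show ?thesis using a kk unfolding FF_def e
      by (simp add: sum_Pow_one FF_def wt_def w4_def insert_commute)
  next
    case b
    then have "k \<notin> PA" using assms(3) k by auto
    then have "k \<in> PB" "n + k \<notin> PB" using b inZ assms(1,2) by auto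
    then have e: "PA \<inter> blk n k = {n+k}" "PB \<inter> blk n k = {k}"
      using b \<open>k \<notin> PA\<close> by (auto simp: blk_def)
    show ?thesis using b kk unfolding FF_def e
      by (simp add: sum_Pow_one FF_def wt_def w4_def insert_commute)
  next
    case c
    then have "k \<in> PB" "n + k \<in> PB" using inZ assms(1) by auto
    then have e: "PA \<inter> blk n k = {}" "PB \<inter> blk n k = {k, n+k}"
      using c by (auto simp: blk_def)
    show ?thesis using c kk unfolding FF_def e
      by (simp add: sum_Pow_two FF_def wt_def w4_def insert_commute)
  qed
qed

lemma card_split:
  assumes "PA \<subseteq> Zset n" "\<forall>k\<in>{1..n}. \<not> (k \<in> PA \<and> n + k \<in> PA)"
  shows "card {k\<in>{1..n}. k \<in> PA \<or> n + k \<in> PA} = card PA"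
proof -
  define f where "f = (\<lambda>e::nat. if e \<le> n then e else e - n)"
  have inj: "inj_on f PA"
  proof (rule inj_onI)
    fix a b assume ab: "a \<in> PA" "b \<in> PA" "f a = f b"
    have a1: "1 \<le> a" "a \<le> 2*n" "1 \<le> b" "b \<le> 2*n" using ab(1,2) assms(1) by (auto simp: Zset_def)
    show "a = b"
    proof (cases "a \<le> n"; cases "b \<le> n")
      assume "a \<le> n" "b \<le> n" then show ?thesis using ab(3) by (simp add: f_def)
    next
      assume "a \<le> n" "\<not> b \<le> n"
      then have "a = b - n" using ab(3) by (simp add: f_def)
      then have "a \<in> {1..n}" "n + a = b" using \<open>\<not> b \<le> n\<close> a1 by auto
      then show ?thesis using assms(2) ab(1,2) by blast
    next
      assume "\<not> a \<le> n" "b \<le> n"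
      then have "b = a - n" using ab(3) by (simp add: f_def)
      then have "b \<in> {1..n}" "n + b = a" using \<open>\<not> a \<le> n\<close> a1 by auto
      then show ?thesis using assms(2) ab(1,2) by blast
    next
      assume "\<not> a \<le> n" "\<not> b \<le> n"
      then have "a - n = b - n" using ab(3) by (simp add: f_def)
      then show ?thesis using \<open>\<not> a \<le> n\<close> \<open>\<not> b \<le> n\<close> by linarith
    qed
  qed
  have img: "f ` PA = {k\<in>{1..n}. k \<in> PA \<or> n + k \<in> PA}"
  proof (intro equalityI subsetI)
    fix x assume "x \<in> f ` PA"
    then obtain e where e: "e \<in> PA" "x = f e" by blast
    then have "1 \<le> e" "e \<le> 2*n" using assms(1) by (auto simp: Zset_def)
    show "x \<in> {k\<in>{1..n}. k \<in> PA \<or> n + k \<in> PA}"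
    proof (cases "e \<le> n")
      case True then show ?thesis using e \<open>1 \<le> e\<close> by (simp add: f_def)
    next
      case False
      then have "x = e - n" "n + (e - n) = e" using e by (auto simp: f_def)
      then show ?thesis using e False \<open>e \<le> 2*n\<close> by auto
    qed
  next
    fix k assume k: "k \<in> {k\<in>{1..n}. k \<in> PA \<or> n + k \<in> PA}"
    show "k \<in> f ` PA"
    proof (cases "k \<in> PA")
      case True
      moreover have "f k = k" using k by (simp add: f_def)
      ultimately show ?thesis by (metis image_eqI)
    next
      case False
      then have "n + k \<in> PA" using k by blast
      moreover have "f (n+k) = k" using k by (simp add: f_def)
      ultimately show ?thesis by (metis image_eqI)
    qed
  qed
  show ?thesis using card_image[OF inj] img by simp
qed

lemma prod_block:
  "(\<Prod>k\<in>{1..n}. (if k \<in> PA \<or> n + k \<in> PA then 20 else 64 :: real))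
    = 20 ^ card {k\<in>{1..n}. k \<in> PA \<or> n + k \<in> PA} * 64 ^ (n - card {k\<in>{1..n}. k \<in> PA \<or> n + k \<in> PA})"
proof -
  let ?A = "{k\<in>{1..n}. k \<in> PA \<or> n + k \<in> PA}"
  have e1: "{1..n} \<inter> {k. k \<in> PA \<or> n + k \<in> PA} = ?A" by auto
  have e2: "{1..n} \<inter> - {k. k \<in> PA \<or> n + k \<in> PA} = {1..n} - ?A" by auto
  have e3: "card ({1..n} - ?A) = n - card ?A"
    by (subst card_Diff_subset) auto
  have "(\<Prod>k\<in>{1..n}. (if k \<in> PA \<or> n + k \<in> PA then 20 else 64 :: real))
     = (\<Prod>k\<in>{1..n} \<inter> {k. k \<in> PA \<or> n + k \<in> PA}. 20) * (\<Prod>k\<in>{1..n} \<inter> - {k. k \<in> PA \<or> n + k \<in> PA}. 64)"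
    by (rule prod.If_cases) simp
  also have "\<dots> = 20 ^ card ?A * 64 ^ card ({1..n} - ?A)"
    unfolding e1 e2 by (simp only: prod_constant)
  finally show ?thesis unfolding e3 .
qed

lemma cs_sum:
  fixes f :: "'a \<Rightarrow> real"
  shows "(\<Sum>i\<in>I. f i)^2 \<le> real (card I) * (\<Sum>i\<in>I. (f i)^2)"
proof -
  have "0 \<le> (\<Sum>i\<in>I. \<Sum>j\<in>I. (f i - f j)^2)" by (intro sum_nonneg) auto
  also have "\<dots> = (\<Sum>i\<in>I. \<Sum>j\<in>I. ((f i)^2 + (f j)^2) - 2 * (f i * f j))"
    by (rule sum.cong[OF refl], rule sum.cong[OF refl]) (simp add: power2_diff)
  also have "\<dots> = (\<Sum>i\<in>I. \<Sum>j\<in>I. (f i)^2 + (f j)^2) - 2 * (\<Sum>i\<in>I. \<Sum>j\<in>I. f i * f j)"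
    by (simp only: sum_subtractf sum_distrib_left)
  also have "(\<Sum>i\<in>I. \<Sum>j\<in>I. f i * f j) = (\<Sum>i\<in>I. f i)^2"
    by (simp only: sum_product[symmetric] power2_eq_square)
  also have "(\<Sum>i\<in>I. \<Sum>j\<in>I. (f i)^2 + (f j)^2) = 2 * (real (card I) * (\<Sum>i\<in>I. (f i)^2))"
  proof -
    have "(\<Sum>i\<in>I. \<Sum>j\<in>I. (f i)^2 + (f j)^2) = (\<Sum>i\<in>I. real (card I) * (f i)^2 + (\<Sum>j\<in>I. (f j)^2))"
      by (simp only: sum.distrib) simp
    also have "\<dots> = real (card I) * (\<Sum>i\<in>I. (f i)^2) + real (card I) * (\<Sum>j\<in>I. (f j)^2)"
      by (simp only: sum.distrib sum_distrib_left[symmetric]) simp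
    finally show ?thesis by simp
  qed
  finally show ?thesis by simp
qed

lemma rect_image: "rect S T = (\<lambda>(X,Y). X \<union> Y) ` (S \<times> T)"
  by (auto simp: rect_def)

lemma disc:
  assumes P: "PA \<union> PB = Zset n" "PA \<inter> PB = {}"
    and np: "\<forall>k\<in>{1..n}. \<not> (k \<in> PA \<and> n + k \<in> PA)"
    and S: "SA \<subseteq> Pow PA" "SB \<subseteq> Pow PB"
  shows "(\<Sum>U\<in>rect SA SB. mu n U)^2 \<le> 40 ^ card PA * 64 ^ (n - card PA)"
proof -
  have finZ: "finite (Zset n)" by (simp add: Zset_def)
  have finA: "finite PA" and finB: "finite PB" using P finZ by (metis finite_Un)+
  have finSA: "finite SA" using S finA by (meson finite_Pow_iff finite_subset)
  have finSB: "finite SB" using S finB by (meson finite_Pow_iff finite_subset)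
  have subA: "PA \<subseteq> (\<Union>k\<in>{1..n}. blk n k)" and subB: "PB \<subseteq> (\<Union>k\<in>{1..n}. blk n k)"
    using P Zset_blk[of n] by auto
  define c where "c X = (\<Sum>Y\<in>SB. mu n (X \<union> Y))" for X
  have inj: "inj_on (\<lambda>(X,Y). X \<union> Y) (SA \<times> SB)"
  proof (rule inj_onI, clarify)
    fix X Y X' Y' assume h: "X \<in> SA" "Y \<in> SB" "X' \<in> SA" "Y' \<in> SB" "X \<union> Y = X' \<union> Y'"
    have "X \<subseteq> PA" "X' \<subseteq> PA" "Y \<subseteq> PB" "Y' \<subseteq> PB" using h S by auto
    then have "X = (X \<union> Y) \<inter> PA" "X' = (X' \<union> Y') \<inter> PA" "Y = (X \<union> Y) \<inter> PB" "Y' = (X' \<union> Y') \<inter> PB"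
      using P(2) by auto
    then show "X = X' \<and> Y = Y'" using h(5) by metis
  qed
  have s1: "(\<Sum>U\<in>rect SA SB. mu n U) = (\<Sum>X\<in>SA. c X)"
    unfolding rect_image c_def sum.reindex[OF inj]
    by (simp add: sum.cartesian_product case_prod_beta comp_def)
  have s2: "(\<Sum>X\<in>SA. c X)^2 \<le> real (card SA) * (\<Sum>X\<in>SA. (c X)^2)" by (rule cs_sum)
  have s3: "(\<Sum>X\<in>SA. (c X)^2) \<le> (\<Sum>X\<in>Pow PA. (c X)^2)"
    by (rule sum_mono2) (use S finA in auto)
  have s4: "card SA \<le> 2 ^ card PA"
    using card_mono[OF _ S(1)] finA by (simp add: card_Pow)
  define G where "G Y Y' = (\<Sum>X\<in>Pow PA. mu n (X \<union> Y) * mu n (X \<union> Y'))" for Y Y'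
  have s5: "(\<Sum>X\<in>Pow PA. (c X)^2) = (\<Sum>Y\<in>SB. \<Sum>Y'\<in>SB. G Y Y')"
  proof -
    have "(\<Sum>X\<in>Pow PA. (c X)^2) = (\<Sum>X\<in>Pow PA. \<Sum>Y\<in>SB. \<Sum>Y'\<in>SB. mu n (X \<union> Y) * mu n (X \<union> Y'))"
      unfolding c_def power2_eq_square sum_product by simp
    also have "\<dots> = (\<Sum>Y\<in>SB. \<Sum>X\<in>Pow PA. \<Sum>Y'\<in>SB. mu n (X \<union> Y) * mu n (X \<union> Y'))"
      by (rule sum.swap)
    also have "\<dots> = (\<Sum>Y\<in>SB. \<Sum>Y'\<in>SB. G Y Y')"
      unfolding G_def by (rule sum.cong[OF refl], rule sum.swap)
    finally show ?thesis .
  qed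
  have s6: "G Y Y' = (\<Prod>k\<in>{1..n}. FF n PA k (Y \<inter> blk n k) (Y' \<inter> blk n k))" for Y Y'
  proof -
    have "G Y Y' = (\<Sum>X\<in>Pow PA. \<Prod>k\<in>{1..n}. wt n k (X \<inter> blk n k \<union> Y \<inter> blk n k) * wt n k (X \<inter> blk n k \<union> Y' \<inter> blk n k))"
      unfolding G_def mu_def by (simp add: prod.distrib Int_Un_distrib2)
    also have "\<dots> = (\<Prod>k\<in>{1..n}. FF n PA k (Y \<inter> blk n k) (Y' \<inter> blk n k))"
      unfolding FF_def
      by (rule sum_Pow_prod[where g = "\<lambda>k V. wt n k (V \<union> Y \<inter> blk n k) * wt n k (V \<union> Y' \<inter> blk n k)"])
         (use finA subA blk_disj in auto)
    finally show ?thesis .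
  qed
  have s7: "(\<Sum>Y\<in>SB. \<Sum>Y'\<in>SB. G Y Y') \<le> (\<Sum>Y\<in>Pow PB. \<Sum>Y'\<in>Pow PB. \<bar>G Y Y'\<bar>)"
  proof -
    have "(\<Sum>Y\<in>SB. \<Sum>Y'\<in>SB. G Y Y') \<le> (\<Sum>Y\<in>SB. \<Sum>Y'\<in>SB. \<bar>G Y Y'\<bar>)"
      by (intro sum_mono) simp
    also have "\<dots> \<le> (\<Sum>Y\<in>SB. \<Sum>Y'\<in>Pow PB. \<bar>G Y Y'\<bar>)"
      by (intro sum_mono sum_mono2) (use S finB in auto)
    also have "\<dots> \<le> (\<Sum>Y\<in>Pow PB. \<Sum>Y'\<in>Pow PB. \<bar>G Y Y'\<bar>)"
      by (intro sum_mono2) (use S finB in \<open>auto intro: sum_nonneg\<close>)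
    finally show ?thesis .
  qed
  have s8: "(\<Sum>Y\<in>Pow PB. \<Sum>Y'\<in>Pow PB. \<bar>G Y Y'\<bar>)
      = (\<Prod>k\<in>{1..n}. \<Sum>Z\<in>Pow (PB \<inter> blk n k). \<Sum>Z'\<in>Pow (PB \<inter> blk n k). \<bar>FF n PA k Z Z'\<bar>)"
  proof -
    have "(\<Sum>Y\<in>Pow PB. \<Sum>Y'\<in>Pow PB. \<bar>G Y Y'\<bar>)
        = (\<Sum>Y\<in>Pow PB. \<Sum>Y'\<in>Pow PB. \<Prod>k\<in>{1..n}. \<bar>FF n PA k (Y \<inter> blk n k) (Y' \<inter> blk n k)\<bar>)"
      by (simp add: s6 abs_prod)
    also have "\<dots> = (\<Sum>Y\<in>Pow PB. \<Prod>k\<in>{1..n}. \<Sum>Z'\<in>Pow (PB \<inter> blk n k). \<bar>FF n PA k (Y \<inter> blk n k) Z'\<bar>)"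
    proof (rule sum.cong[OF refl])
      fix Y
      show "(\<Sum>Y'\<in>Pow PB. \<Prod>k\<in>{1..n}. \<bar>FF n PA k (Y \<inter> blk n k) (Y' \<inter> blk n k)\<bar>)
          = (\<Prod>k\<in>{1..n}. \<Sum>Z'\<in>Pow (PB \<inter> blk n k). \<bar>FF n PA k (Y \<inter> blk n k) Z'\<bar>)"
        by (rule sum_Pow_prod[where g = "\<lambda>k Z'. \<bar>FF n PA k (Y \<inter> blk n k) Z'\<bar>"])
           (use finB subB blk_disj in auto)
    qed
    also have "\<dots> = (\<Prod>k\<in>{1..n}. \<Sum>Z\<in>Pow (PB \<inter> blk n k). \<Sum>Z'\<in>Pow (PB \<inter> blk n k). \<bar>FF n PA k Z Z'\<bar>)"
      by (rule sum_Pow_prod[where g = "\<lambda>k Z. \<Sum>Z'\<in>Pow (PB \<inter> blk n k). \<bar>FF n PA k Z Z'\<bar>"])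
         (use finB subB blk_disj in auto)
    finally show ?thesis .
  qed
  have s9: "(\<Prod>k\<in>{1..n}. \<Sum>Z\<in>Pow (PB \<inter> blk n k). \<Sum>Z'\<in>Pow (PB \<inter> blk n k). \<bar>FF n PA k Z Z'\<bar>)
      = 20 ^ card PA * 64 ^ (n - card PA)"
  proof -
    have "(\<Prod>k\<in>{1..n}. \<Sum>Z\<in>Pow (PB \<inter> blk n k). \<Sum>Z'\<in>Pow (PB \<inter> blk n k). \<bar>FF n PA k Z Z'\<bar>)
        = (\<Prod>k\<in>{1..n}. (if k \<in> PA \<or> n + k \<in> PA then 20 else 64 :: real))"
      by (rule prod.cong[OF refl], rule block_val[OF P np])
    also have "\<dots> = 20 ^ card PA * 64 ^ (n - card PA)"
    proof -
      have cs: "card {k\<in>{1..n}. k \<in> PA \<or> n + k \<in> PA} = card PA"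
        by (rule card_split[OF _ np]) (use P in auto)
      show ?thesis unfolding prod_block cs ..
    qed
    finally show ?thesis .
  qed
  have cpos: "0 \<le> (\<Sum>X\<in>Pow PA. (c X)^2)" by (intro sum_nonneg) auto
  have "(\<Sum>U\<in>rect SA SB. mu n U)^2 \<le> real (card SA) * (\<Sum>X\<in>Pow PA. (c X)^2)"
    using s1 s2 s3 by (metis mult_left_mono of_nat_0_le_iff order_trans)
  also have "\<dots> \<le> 2 ^ card PA * (20 ^ card PA * 64 ^ (n - card PA))"
  proof (rule mult_mono)
    show "real (card SA) \<le> 2 ^ card PA" using s4 by (metis of_nat_le_iff of_nat_numeral of_nat_power)
    show "(\<Sum>X\<in>Pow PA. (c X)^2) \<le> 20 ^ card PA * 64 ^ (n - card PA)"
      using s5 s7 s8 s9 by linarith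
  qed (use cpos in auto)
  also have "\<dots> = 40 ^ card PA * 64 ^ (n - card PA)"
    by (simp add: power_mult_distrib[symmetric])
  finally show ?thesis .
qed

lemma fin_Zint: "finite (Zint n i j)" by (simp add: Zint_def Zset_def)

lemma nopair_int:
  assumes "card (Zint n i j) \<le> n" "k \<in> {1..n}"
  shows "\<not> (k \<in> Zint n i j \<and> n + k \<in> Zint n i j)"
proof
  assume h: "k \<in> Zint n i j \<and> n + k \<in> Zint n i j"
  have "{k..n+k} \<subseteq> Zint n i j" using h assms(2) by (auto simp: Zint_def Zset_def)
  then have "card {k..n+k} \<le> card (Zint n i j)" by (rule card_mono[OF fin_Zint])
  then show False using assms(1) by simp
qed

lemma nopair_comp:
  assumes "card (Zset n - Zint n i j) \<le> n" "k \<in> {1..n}"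
  shows "\<not> (k \<in> Zset n - Zint n i j \<and> n + k \<in> Zset n - Zint n i j)"
proof
  assume h: "k \<in> Zset n - Zint n i j \<and> n + k \<in> Zset n - Zint n i j"
  have fin: "finite (Zset n - Zint n i j)" by (simp add: Zset_def)
  have k: "1 \<le> k" "k \<le> n" using assms(2) by auto
  have h1: "k < i \<or> k > j" and h2: "n + k < i \<or> n + k > j"
    using h k by (auto simp: Zint_def Zset_def)
  have "n + 1 \<le> card (Zset n - Zint n i j)"
  proof (cases "n + k < i \<or> k > j")
    case True
    then have "{k..n+k} \<subseteq> Zset n - Zint n i j" using k by (auto simp: Zint_def Zset_def)
    then have "card {k..n+k} \<le> card (Zset n - Zint n i j)" by (rule card_mono[OF fin])
    then show ?thesis by simp
  next
    case False
    then have "k < i" "n + k > j" using h1 h2 by auto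
    then have sub: "{1..k} \<union> {n+k..2*n} \<subseteq> Zset n - Zint n i j" using k by (auto simp: Zint_def Zset_def)
    have "card ({1..k} \<union> {n+k..2*n}) = card {1..k} + card {n+k..2*n}"
      by (rule card_Un_disjoint) (use k in auto)
    also have "\<dots> = n + 1" using k by simp
    finally show ?thesis using card_mono[OF fin sub] by simp
  qed
  then show False using assms(1) by simp
qed

lemma rect_comm: "rect S T = rect T S"
  unfolding rect_def by (auto simp: Un_commute)

lemma obr_struct:
  assumes "ordered_balanced_rectangle n R"
  shows "\<exists>PA PB SA SB. PA \<union> PB = Zset n \<and> PA \<inter> PB = {} \<and> (\<forall>k\<in>{1..n}. \<not> (k \<in> PA \<and> n + k \<in> PA))
     \<and> SA \<subseteq> Pow PA \<and> SB \<subseteq> Pow PB \<and> R = rect SA SB \<and> 2 * n \<le> 3 * card PA"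
proof -
  obtain P0 P1 where op: "ordered_partition n P0 P1" and bp: "balanced_partition n P0 P1"
    and ir: "is_rectangle P0 P1 R"
    using assms unfolding ordered_balanced_rectangle_def by blast
  obtain S T where ST: "S \<subseteq> Pow P0" "T \<subseteq> Pow P1" "R = rect S T"
    using ir unfolding is_rectangle_def by blast
  have part: "P0 \<union> P1 = Zset n" "P0 \<inter> P1 = {}" using op unfolding ordered_partition_def is_partition_def by auto
  obtain i j where ij: "P0 = Zint n i j \<or> P1 = Zint n i j" using op unfolding ordered_partition_def by blast
  have finZ: "finite (Zset n)" by (simp add: Zset_def)
  have cZ: "card (Zset n) = 2 * n" by (simp add: Zset_def)
  have csum: "card P0 + card P1 = 2 * n"
    using card_Un_disjoint[of P0 P1] part finZ cZ by (metis finite_Un)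
  have b0: "2 * n \<le> 3 * card P0" and b1: "2 * n \<le> 3 * card P1"
  proof -
    have "2 * real n / 3 \<le> real (card P0)" "2 * real n / 3 \<le> real (card P1)"
      using bp unfolding balanced_partition_def by auto
    then show "2 * n \<le> 3 * card P0" "2 * n \<le> 3 * card P1" by linarith+
  qed
  have comp0: "P1 = Zset n - P0" and comp1: "P0 = Zset n - P1" using part by auto
  have np0: "\<forall>k\<in>{1..n}. \<not> (k \<in> P0 \<and> n + k \<in> P0)" if "card P0 \<le> n"
  proof (cases "P0 = Zint n i j")
    case True then show ?thesis using nopair_int that by simp
  next
    case False then have "P1 = Zint n i j" using ij by simp
    then show ?thesis using nopair_comp that comp1 by simp
  qed
  have np1: "\<forall>k\<in>{1..n}. \<not> (k \<in> P1 \<and> n + k \<in> P1)" if "card P1 \<le> n"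
  proof (cases "P1 = Zint n i j")
    case True then show ?thesis using nopair_int that by simp
  next
    case False then have "P0 = Zint n i j" using ij by simp
    then show ?thesis using nopair_comp that comp0 by simp
  qed
  show ?thesis
  proof (cases "card P0 \<le> n")
    case True
    then show ?thesis using np0 part ST b0 by blast
  next
    case False
    then have "card P1 \<le> n" using csum by linarith
    moreover have "P1 \<union> P0 = Zset n" "P1 \<inter> P0 = {}" "R = rect T S" using part ST rect_comm by auto
    ultimately show ?thesis using np1 ST b1 by blast
  qed
qed

lemma pow_ineq:
  assumes "2 * n \<le> 3 * s" "s \<le> n"
  shows "(40::real) ^ (3*s) * 64 ^ (3*(n-s)) \<le> 102400 ^ n"
proof -
  obtain d where d: "3 * s = 2 * n + d" using assms(1) le_Suc_ex by blast
  have dn: "d \<le> n" using d assms(2) by linarith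
  have e: "3 * (n - s) = n - d" using d assms(2) by linarith
  have "(40::real) ^ (3*s) * 64 ^ (3*(n-s)) = 40 ^ (2*n) * (40 ^ d * 64 ^ (n - d))"
    unfolding d e by (simp add: power_add)
  also have "\<dots> \<le> 40 ^ (2*n) * (64 ^ d * 64 ^ (n - d))"
    by (intro mult_left_mono mult_right_mono power_mono) auto
  also have "\<dots> = 40 ^ (2*n) * 64 ^ n" using dn by (simp add: power_add[symmetric])
  also have "\<dots> = 102400 ^ n" by (simp add: power_mult power_mult_distrib[symmetric])
  finally show ?thesis .
qed

lemma rect_bound:
  assumes "ordered_balanced_rectangle n R"
  shows "\<bar>\<Sum>U\<in>R. mu n U\<bar> \<le> root 6 (102400 ^ n)"
proof -
  obtain PA PB SA SB where h: "PA \<union> PB = Zset n" "PA \<inter> PB = {}" "\<forall>k\<in>{1..n}. \<not> (k \<in> PA \<and> n + k \<in> PA)"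
     "SA \<subseteq> Pow PA" "SB \<subseteq> Pow PB" "R = rect SA SB" "2 * n \<le> 3 * card PA"
    using obr_struct[OF assms] by blast
  let ?s = "card PA"
  have sn: "?s \<le> n"
  proof -
    have "card {k\<in>{1..n}. k \<in> PA \<or> n + k \<in> PA} = ?s" by (rule card_split[OF _ h(3)]) (use h in auto)
    moreover have "card {k\<in>{1..n}. k \<in> PA \<or> n + k \<in> PA} \<le> card {1..n}" by (rule card_mono) auto
    ultimately show ?thesis by simp
  qed
  let ?psi = "\<Sum>U\<in>R. mu n U"
  have sq: "?psi ^ 2 \<le> 40 ^ ?s * 64 ^ (n - ?s)" using disc[OF h(1-5)] h(6) by simp
  have "\<bar>?psi\<bar> ^ 6 = (?psi ^ 2) ^ 3" by (simp add: power_even_abs flip: power_mult)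
  also have "\<dots> \<le> (40 ^ ?s * 64 ^ (n - ?s)) ^ 3" by (rule power_mono[OF sq]) simp
  also have "\<dots> = (40::real) ^ (3 * ?s) * 64 ^ (3 * (n - ?s))"
    by (simp add: power_mult_distrib power_mult[symmetric] mult.commute)
  also have "\<dots> \<le> 102400 ^ n" by (rule pow_ineq[OF h(7) sn])
  also have "\<dots> = root 6 (102400 ^ n) ^ 6" by simp
  finally show ?thesis by (subst (asm) power_mono_iff) auto
qed

lemma six_seven: "n \<ge> 5 \<Longrightarrow> 2 * (6::real) ^ n \<le> 7 ^ n"
proof (induction n rule: dec_induct)
  case base then show ?case by simp
next
  case (step m)
  have "2 * (6::real) ^ Suc m = 6 * (2 * 6 ^ m)" by simp
  also have "\<dots> \<le> 6 * 7 ^ m" using step.IH by simp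
  also have "\<dots> \<le> 7 * 7 ^ m" by simp
  finally show ?case by simp
qed

lemma big_ineq: "(4::real) * 102400 ^ 10 \<le> 117649 ^ 10"
  by simp

theorem mainTheorem9:
  shows "\<exists>c::real. c > 0 \<and> (\<exists>N::nat. \<forall>n \<ge> N. \<forall>(l::nat) (R :: nat \<Rightarrow> nat set set).
     (\<forall>i\<in>{1..l}. ordered_balanced_rectangle n (R i)) \<longrightarrow>
     (\<forall>i\<in>{1..l}. \<forall>j\<in>{1..l}. i \<noteq> j \<longrightarrow> R i \<inter> R j = {}) \<longrightarrow>
     (\<Union>i\<in>{1..l}. R i) = Lang n \<longrightarrow>
     real l \<ge> 2 powr (c * real n))"
proof (intro exI[of _ "1/60"] conjI exI[of _ "60::nat"] allI impI)
  show "(0::real) < 1/60" by simp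
  fix n l :: nat and R :: "nat \<Rightarrow> nat set set"
  assume n: "60 \<le> n"
    and H1: "\<forall>i\<in>{1..l}. ordered_balanced_rectangle n (R i)"
    and H2: "\<forall>i\<in>{1..l}. \<forall>j\<in>{1..l}. i \<noteq> j \<longrightarrow> R i \<inter> R j = {}"
    and H3: "(\<Union>i\<in>{1..l}. R i) = Lang n"
  define r where "r = root 6 (102400 ^ n)"
  have rpos: "0 < r" unfolding r_def by simp
  have r6: "r ^ 6 = 102400 ^ n" unfolding r_def by simp
  have finL: "finite (Lang n)" unfolding Lang_def Zset_def by (rule finite_subset[of _ "Pow {1..2*n}"]) auto
  have finR: "\<forall>i\<in>{1..l}. finite (R i)" using H3 finL by (metis UN_upper finite_subset)
  have "(\<Sum>U\<in>Lang n. mu n U) = (\<Sum>i\<in>{1..l}. \<Sum>U\<in>R i. mu n U)"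
    unfolding H3[symmetric] by (rule sum.UNION_disjoint[OF _ finR H2]) simp
  then have "7 ^ n - 6 ^ n = \<bar>\<Sum>i\<in>{1..l}. \<Sum>U\<in>R i. mu n U\<bar>"
    using sum_mu_Lang[of n] power_mono[of "6::real" 7 n] by (simp add: abs_if)
  also have "\<dots> \<le> (\<Sum>i\<in>{1..l}. \<bar>\<Sum>U\<in>R i. mu n U\<bar>)" by (rule sum_abs)
  also have "\<dots> \<le> (\<Sum>i\<in>{1..l}. r)" using rect_bound H1 unfolding r_def by (intro sum_mono) auto
  also have "\<dots> = real l * r" by simp
  finally have A: "7 ^ n - 6 ^ n \<le> real l * r" .
  have "2 * (6::real) ^ n \<le> 7 ^ n" using n by (intro six_seven) simp
  with A have B: "(7::real) ^ n \<le> 2 * real l * r" by simp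
  show "2 powr (1/60 * real n) \<le> real l"
  proof (rule ccontr)
    assume "\<not> 2 powr (1/60 * real n) \<le> real l"
    then have lt: "real l < 2 powr (1/60 * real n)" by simp
    define q where "q = 2 powr (1/60 * real n)"
    have q60: "q ^ 60 = 2 ^ n"
      unfolding q_def by (simp add: powr_power powr_realpow)
    have "2 * real l * r < 2 * q * r" using lt rpos unfolding q_def by simp
    with B have "(7::real) ^ n < 2 * q * r" by simp
    then have "((7::real) ^ n) ^ 60 < (2 * q * r) ^ 60" by (intro power_strict_mono) auto
    also have "\<dots> = 2 ^ 60 * q ^ 60 * (r ^ 6) ^ 10" by (simp add: power_mult_distrib flip: power_mult)
    also have "\<dots> = 2 ^ 60 * 2 ^ n * (102400 ^ n) ^ 10" by (simp add: q60 r6)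
    finally have C: "((7::real) ^ n) ^ 60 < 2 ^ 60 * 2 ^ n * (102400 ^ n) ^ 10" .
    have e7: "((7::real) ^ n) ^ 60 = (7 ^ 60) ^ n"
      by (metis power_mult mult.commute)
    have "((7::real) ^ n) ^ 60 = (117649 ^ 10) ^ n" unfolding e7 by simp
    also have "\<dots> \<ge> (4 * 102400 ^ 10) ^ n" by (intro power_mono big_ineq) simp
    finally have D: "(4 * 102400 ^ 10) ^ n \<le> ((7::real) ^ n) ^ 60" .
    have e1: "((102400::real) ^ 10) ^ n = (102400 ^ n) ^ 10"
      by (metis power_mult mult.commute)
    have e2: "(4::real) ^ n = 2 ^ n * 2 ^ n"
      by (simp flip: power_mult_distrib)
    have "(4 * 102400 ^ 10) ^ n = (2::real) ^ n * 2 ^ n * (102400 ^ n) ^ 10"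
      by (simp only: power_mult_distrib e1 e2)
    define X where "X = ((102400::real) ^ n) ^ 10"
    have Xp: "0 < X" unfolding X_def by simp
    have "(2::real) ^ n * 2 ^ n * X < 2 ^ 60 * 2 ^ n * X"
      using C D \<open>(4 * 102400 ^ 10) ^ n = (2::real) ^ n * 2 ^ n * (102400 ^ n) ^ 10\<close>
      unfolding X_def by linarith
    then have "(2::real) ^ n * 2 ^ n < 2 ^ 60 * 2 ^ n"
      using Xp by (meson mult_less_cancel_right_pos)
    then have "(2::real) ^ n < 2 ^ 60"
      by (metis mult_less_cancel_right_pos zero_less_power zero_less_numeral)
    then have "n < 60" by (metis power_strict_increasing_iff one_less_numeral_iff semiring_norm(76))
    with n show False by simp
  qed
qed

end
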